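(* Let $\mathbb{E}$ be a finite-dimensional real vector space with inner product $\langle\cdot,\cdot\rangle$ and Euclidean norm $\|\cdot\|$. Let $\bar{\mathsf{K}}\subset\mathbb{E}$ be a closed convex set with nonempty (relative) interior $\mathsf{K}$, let $\mathbf{A}:\mathbb{E}\to\mathbb{R}^m$ be linear with $\mathrm{image}(\mathbf{A})=\mathbb{R}^m$, $b\in\mathbb{R}^m$, $\mathsf{L}=\{x\in\mathbb{E}:\mathbf{A}x=b\}$, and assume $\mathsf{X}=\mathsf{K}\cap\mathsf{L}\neq\emptyset$. Let $f:\mathbb{E}\to\mathbb{R}$ be (possibly non-convex) continuous on $\bar{\mathsf{X}}=\bar{\mathsf{K}}\cap\mathsf{L}$ and continuously differentiable on $\mathsf{X}$, and assume the problem $\min\{f(x): \mathbf{A}x=b,\ x\in\bar{\mathsf{K}}\}$ admits a global solution. Let $h$ be a $\nu$-self-concordant barrier for $\bar{\mathsf{K}}$ with Hessian $H(x)=\nabla^2 h(x)$. Let $x^*\in\bar{\mathsf{K}}$ be a local solution of this problem. Then there exist sequences $x^k\in\mathbb{E}$, $y^k\in\mathbb{R}^m$, $s^k\in\mathbb{E}^*$ and $\sigma_k>0$ with $\sigma_k\to0$ such that: (1) $x^k\in\mathsf{K}$, $\mathbf{A}x^k=b$ for all $k$, and $x^k\to x^*$; (2) $\nabla f(x^k)-\mathbf{A}^*y^k-s^k\to 0$; (3) $-s^k\in \mathrm{N}^{\sigma_k}_{\bar{\mathsf{K}}}(x^k)$ for all $k$. If, in addition, $f$ is twice differentiable on $\mathsf{K}$,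 then there exist $\theta_k,\delta_k\in(0,\infty)$ with $\theta_k\to0$, $\delta_k\to0$ such that $\langle(\nabla^2 f(x^k)+\theta_k H(x^k)+\delta_k\mathbf{I})d,d\rangle\ge 0$ for all $d\in\mathbb{E}$ with $\mathbf{A}d=0$, where $\mathbf{I}$ is the identity operator.
   Context: $\mathbb{E}^*$ is the dual space; $\mathbf{A}^*$ denotes the adjoint of $\mathbf{A}$. A function $h:\bar{\mathsf{K}}\to(-\infty,+\infty]$ with $\mathrm{dom}\,h=\mathsf{K}$ is a $\nu$-self-concordant barrier for $\bar{\mathsf{K}}$ (in the sense of Nesterov–Nemirovski; in particular $h$ is convex, three times continuously differentiable on $\mathsf{K}$, with positive definite Hessian $H(x)$) if for all $x\in\mathsf{K}$, $u\in\mathbb{E}$: $|D^3h(x)[u,u,u]|\le 2\,D^2h(x)[u,u]^{3/2}$ and $\sup_{u\in\mathbb{E}}|2Dh(x)[u]-D^2h(x)[u,u]|\le\nu$. For $\varepsilon\ge0$ and $x\in\bar{\mathsf{K}}$, the $\varepsilon$-approximate normal cone is $\mathrm{N}^{\varepsilon}_{\bar{\mathsf{K}}}(x)=\{s\in\mathbb{E}^*: \langle s,y-x\rangle\le\varepsilon\ \forall y\in\bar{\mathsf{K}}\}$. *)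

theory Defs
  imports "HOL-Analysis.Analysis"
begin

text \<open>The epsilon-approximate normal cone of a set C at x (dual space identified
  with the space itself via the inner product).\<close>
definition approx_normal_cone :: "real \<Rightarrow> ('a::real_inner) set \<Rightarrow> 'a \<Rightarrow> 'a set" where
  "approx_normal_cone eps C x = {s. \<forall>y\<in>C. s \<bullet> (y - x) \<le> eps}"

text \<open>h is a nu-self-concordant barrier (Nesterov--Nemirovski) for the closed convex
  set Kb, with domain K = interior Kb, gradient g and Hessian H (H x is a linear
  operator, so D^2 h(x)[u,v] = H x u \<bullet> v).\<close>
definition sc_barrier ::
  "('a::euclidean_space) set \<Rightarrow> real \<Rightarrow> ('a \<Rightarrow> real) \<Rightarrow> ('a \<Rightarrow> 'a) \<Rightarrow> ('a \<Rightarrow> 'a \<Rightarrow> 'a) \<Rightarrow> bool" where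
  "sc_barrier Kb nu h g H \<longleftrightarrow>
     convex_on (interior Kb) h \<and>
     (\<forall>x\<in>interior Kb. (h has_derivative (\<lambda>u. g x \<bullet> u)) (at x)) \<and>
     (\<forall>x\<in>interior Kb. (g has_derivative H x) (at x)) \<and>
     (\<exists>D3. (\<forall>x\<in>interior Kb. \<forall>u v.
                ((\<lambda>y. H y u \<bullet> v) has_derivative (\<lambda>w. D3 x u v w)) (at x)) \<and>
           (\<forall>u v w. continuous_on (interior Kb) (\<lambda>x. D3 x u v w)) \<and>
           (\<forall>x\<in>interior Kb. \<forall>u. \<bar>D3 x u u u\<bar> \<le> 2 * (H x u \<bullet> u) powr (3/2))) \<and>
     (\<forall>x\<in>interior Kb. \<forall>u. u \<noteq> 0 \<longrightarrow> H x u \<bullet> u > 0) \<and>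
     (\<forall>x\<in>interior Kb. \<forall>u. 2 * (g x \<bullet> u) - H x u \<bullet> u \<le> nu) \<and>
     (\<forall>z\<in>Kb - interior Kb. filterlim h at_top (at z within interior Kb))"

end

theory Submission
  imports Defs
begin


lemma line_deriv:
  fixes F :: "'a::real_normed_vector \<Rightarrow> real"
  assumes "(F has_derivative F') (at (x + t *\<^sub>R d))"
  shows "((\<lambda>s. F (x + s *\<^sub>R d)) has_real_derivative F' d) (at t)"
proof -
  have l: "linear F'" using assms has_derivative_linear by blast
  have "((\<lambda>s. x + s *\<^sub>R d) has_derivative (\<lambda>s. s *\<^sub>R d)) (at t)"
    by (auto intro!: derivative_eq_intros)
  from has_derivative_compose[OF this assms]
  have "((\<lambda>s. F (x + s *\<^sub>R d)) has_derivative (\<lambda>s. F' (s *\<^sub>R d))) (at t)" .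
  moreover have "(\<lambda>s. F' (s *\<^sub>R d)) = (*) (F' d)"
    using linear_scale[OF l] by (auto simp: fun_eq_iff)
  ultimately show ?thesis by (simp add: has_field_derivative_def)
qed

lemma second_order_1d:
  fixes phi psi :: "real \<Rightarrow> real"
  assumes e: "e > 0"
    and lmin: "\<And>t. \<bar>t\<bar> < e \<Longrightarrow> phi 0 \<le> phi t"
    and d1: "\<And>t. \<bar>t\<bar> < e \<Longrightarrow> (phi has_real_derivative psi t) (at t)"
    and d2: "(psi has_real_derivative Q) (at 0)"
  shows "Q \<ge> 0"
proof (rule ccontr)
  assume "\<not> Q \<ge> 0" hence Q: "Q < 0" by simp
  have p0: "psi 0 = 0"
    using DERIV_local_min[OF d1[of 0] e] lmin e by auto
  obtain dd where dd: "dd > 0" "\<And>h. h > 0 \<Longrightarrow> h < dd \<Longrightarrow> psi 0 > psi (0 + h)"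
    using DERIV_neg_dec_right[OF d2 Q] by blast
  define t where "t = min dd e / 2"
  have t: "t > 0" "t < dd" "t < e" using dd e by (auto simp: t_def)
  obtain z where z: "0 < z" "z < t" "phi t - phi 0 = (t - 0) * psi z"
    using MVT2[of 0 t phi psi] t d1 by force
  have "psi z < 0" using dd(2)[of z] z t p0 by auto
  hence "t * psi z < 0" using t by (simp add: mult_pos_neg)
  hence "phi t < phi 0" using z by simp
  thus False using lmin[of t] t by auto
qed

lemma adjoint_range:
  fixes A :: "'a::euclidean_space \<Rightarrow> 'b::euclidean_space"
  assumes l: "linear A" and G: "\<And>d. A d = 0 \<Longrightarrow> G \<bullet> d = 0"
  shows "\<exists>y. adjoint A y = G"
proof -
  obtain v w where v: "v \<in> span (range (adjoint A))"
    and w: "\<And>u. u \<in> span (range (adjoint A)) \<Longrightarrow> orthogonal w u" and G': "G = v + w"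
    using orthogonal_subspace_decomp_exists by blast
  have la: "linear (adjoint A)" using adjoint_linear[OF l] .
  have sp: "span (range (adjoint A)) = range (adjoint A)"
    by (simp add: la linear_subspace_image span_eq_iff)
  have "\<forall>y. A w \<bullet> y = 0"
    using w[of "adjoint A _"] by (auto simp: adjoint_works[OF l, symmetric] orthogonal_def span_base)
  hence "A w = 0" by (metis inner_eq_zero_iff)
  hence "G \<bullet> w = 0" by (rule G)
  moreover have "v \<bullet> w = 0" using w[OF v] by (simp add: orthogonal_def inner_commute)
  ultimately have "w = 0" using G' by (simp add: inner_add_left)
  thus ?thesis using v sp G' by auto
qed



lemma nu_bound_int:
  fixes Kb :: "'a::euclidean_space set"
  assumes bar: "sc_barrier Kb nu h g H" and cvx: "convex Kb"
    and x: "x \<in> interior Kb" and y: "y \<in> interior Kb"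
  shows "g x \<bullet> (y - x) \<le> nu"
proof -
  have gH: "\<And>z. z \<in> interior Kb \<Longrightarrow> (g has_derivative H z) (at z)"
    and pos: "\<And>z u. z \<in> interior Kb \<Longrightarrow> u \<noteq> 0 \<Longrightarrow> H z u \<bullet> u > 0"
    and nub: "\<And>z u. z \<in> interior Kb \<Longrightarrow> 2 * (g z \<bullet> u) - H z u \<bullet> u \<le> nu"
    using bar unfolding sc_barrier_def by blast+
  have linH: "\<And>z. z \<in> interior Kb \<Longrightarrow> linear (H z)"
    using gH has_derivative_linear by blast
  have nu0: "nu \<ge> 0" using nub[OF x, of 0] linear_0[OF linH[OF x]] by simp
  have key: "(g z \<bullet> u)^2 \<le> nu * (H z u \<bullet> u)" if z: "z \<in> interior Kb" for z u
  proof (cases "u = 0")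
    case True thus ?thesis using linear_0[OF linH[OF z]] by simp
  next
    case False
    define a where "a = H z u \<bullet> u"
    have a: "a > 0" using pos[OF z False] a_def by simp
    define lam where "lam = (g z \<bullet> u) / a"
    have "2 * (g z \<bullet> (lam *\<^sub>R u)) - H z (lam *\<^sub>R u) \<bullet> (lam *\<^sub>R u) \<le> nu" by (rule nub[OF z])
    hence "2 * lam * (g z \<bullet> u) - lam * lam * a \<le> nu"
      using linear_scale[OF linH[OF z]] by (simp add: a_def algebra_simps)
    hence "(g z \<bullet> u)^2 / a \<le> nu" using a by (simp add: lam_def power2_eq_square field_simps)
    thus ?thesis using a by (simp add: a_def field_simps)
  qed
  define u where "u = y - x"
  define p where "p = (\<lambda>t::real. x + t *\<^sub>R u)"
  have cint: "convex (interior Kb)" using cvx convex_interior by blast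
  have pin: "p t \<in> interior Kb" if "0 \<le> t" "t \<le> 1" for t
  proof -
    have "(1 - t) *\<^sub>R x + t *\<^sub>R y \<in> interior Kb"
      using cint x y that unfolding convex_def by auto
    moreover have "(1 - t) *\<^sub>R x + t *\<^sub>R y = p t" by (simp add: p_def u_def algebra_simps)
    ultimately show ?thesis by simp
  qed
  define phi where "phi = (\<lambda>t. g (p t) \<bullet> u)"
  define dphi where "dphi = (\<lambda>t. H (p t) u \<bullet> u)"
  have dph: "(phi has_real_derivative dphi t) (at t)" if "0 \<le> t" "t \<le> 1" for t
  proof -
    have "((\<lambda>z. g z \<bullet> u) has_derivative (\<lambda>v. H (p t) v \<bullet> u)) (at (x + t *\<^sub>R u))"
      using gH[OF pin[OF that]] unfolding p_def by (auto intro: derivative_intros)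
    from line_deriv[OF this] show ?thesis by (simp add: phi_def dphi_def p_def)
  qed
  have dpos: "dphi t \<ge> 0" if "0 \<le> t" "t \<le> 1" for t
    using pos[OF pin[OF that], of u] by (cases "u = 0") (auto simp: dphi_def linear_0[OF linH[OF pin[OF that]]])
  show ?thesis
  proof (rule ccontr)
    assume "\<not> ?thesis"
    hence ph0: "phi 0 > nu" by (simp add: phi_def p_def u_def)
    hence ph0p: "phi 0 > 0" using nu0 by linarith
    have mono: "phi t \<ge> phi 0" if "0 < t" "t \<le> 1" for t
    proof -
      have "\<And>s. 0 \<le> s \<Longrightarrow> s \<le> t \<Longrightarrow> (phi has_real_derivative dphi s) (at s)"
        using that dph by simp
      from MVT2[OF that(1) this] obtain z where "0 < z" "z < t" "phi t - phi 0 = (t - 0) * dphi z"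
        by blast
      moreover have "t * dphi z \<ge> 0" using dpos[of z] that \<open>0 < z\<close> \<open>z < t\<close> by simp
      ultimately show ?thesis by simp
    qed
    have phpos: "phi t > 0" if "0 \<le> t" "t \<le> 1" for t
      using mono[of t] ph0p that by (cases "t = 0") auto
    define psi where "psi = (\<lambda>t. - inverse (phi t))"
    define dpsi where "dpsi = (\<lambda>t. dphi t * inverse (phi t ^ 2))"
    have dps: "(psi has_real_derivative dpsi t) (at t)" if "0 \<le> t" "t \<le> 1" for t
    proof -
      have "((\<lambda>t. inverse (phi t)) has_real_derivative - (dphi t * inverse (phi t ^ Suc (Suc 0)))) (at t)"
        using DERIV_inverse_fun[OF dph[OF that]] phpos[OF that] by auto
      from DERIV_minus[OF this] show ?thesis by (simp add: psi_def dpsi_def power2_eq_square)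
    qed
    have "\<And>s. 0 \<le> s \<Longrightarrow> s \<le> 1 \<Longrightarrow> (psi has_real_derivative dpsi s) (at s)"
      using dps by simp
    from MVT2[of 0 1, OF _ this] obtain z where z: "0 < z" "z < 1" "psi 1 - psi 0 = (1 - 0) * dpsi z"
      by auto
    have pz: "phi z > 0" using phpos z by simp
    have "(phi z)^2 \<le> nu * dphi z" using key[OF pin, of z u] z by (simp add: phi_def dphi_def)
    hence "nu * dpsi z \<ge> 1" using pz by (simp add: dpsi_def field_simps)
    moreover have "psi 1 < 0" using phpos[of 1] by (simp add: psi_def)
    ultimately have "nu * (- psi 0) > 1"
    proof -
      assume a1: "nu * dpsi z \<ge> 1" and a2: "psi 1 < 0"
      have nup: "nu > 0" using a1 nu0 by (cases "nu = 0") auto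
      have b1: "nu * psi 1 < 0" using nup a2 by (simp add: mult_pos_neg)
      have "- psi 0 = dpsi z - psi 1" using z(3) by simp
      hence "nu * (- psi 0) = nu * dpsi z - nu * psi 1" by (simp add: right_diff_distrib)
      thus ?thesis using a1 b1 by linarith
    qed
    hence "nu / phi 0 > 1" by (simp add: psi_def divide_inverse)
    hence "nu > phi 0" using ph0p by (simp add: field_simps)
    thus False using ph0 by simp
  qed
qed

lemma nu_bound:
  fixes Kb :: "'a::euclidean_space set"
  assumes bar: "sc_barrier Kb nu h g H" and cvx: "convex Kb" and cl: "closed Kb"
    and ne: "interior Kb \<noteq> {}"
    and x: "x \<in> interior Kb" and y: "y \<in> Kb"
  shows "g x \<bullet> (y - x) \<le> nu"
proof -
  have "closure (interior Kb) = Kb" using convex_closure_interior[OF cvx ne] cl closure_closed by simp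
  hence yc: "y \<in> closure (interior Kb)" using y by simp
  have "closed {y. g x \<bullet> (y - x) \<le> nu}"
    by (intro closed_Collect_le continuous_intros)
  moreover have "interior Kb \<subseteq> {y. g x \<bullet> (y - x) \<le> nu}"
    using nu_bound_int[OF bar cvx x] by auto
  ultimately have "closure (interior Kb) \<subseteq> {y. g x \<bullet> (y - x) \<le> nu}"
    by (rule closure_minimal[rotated])
  thus ?thesis using yc by auto
qed



lemma sublevel_compact:
  fixes C K :: "'a::euclidean_space set" and h :: "'a \<Rightarrow> real"
  assumes C: "compact C" and K: "open K" and hc: "continuous_on K h"
    and blow: "\<And>z. z \<in> C \<Longrightarrow> z \<notin> K \<Longrightarrow> filterlim h at_top (at z within K)"
  shows "compact {w\<in>C. w \<in> K \<and> h w \<le> M}"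
proof -
  let ?T = "{w\<in>C. w \<in> K \<and> h w \<le> M}"
  have "bounded ?T" by (rule bounded_subset[OF compact_imp_bounded[OF C]]) auto
  moreover have "closed ?T"
    unfolding closed_limpt
  proof (intro allI impI)
    fix w assume lw: "w islimpt ?T"
    have wC: "w \<in> C"
    proof -
      have "w islimpt C" using lw islimpt_subset[of w ?T C] by blast
      thus ?thesis using compact_imp_closed[OF C] unfolding closed_limpt by blast
    qed
    show "w \<in> ?T"
    proof (rule ccontr)
      assume nT: "w \<notin> ?T"
      have ev: "eventually (\<lambda>y. h y > M) (at w within K)"
      proof (cases "w \<in> K")
        case True
        hence hw: "h w > M" using nT wC by auto
        have "isCont h w" using continuous_on_eq_continuous_at[OF K] hc True by blast
        hence "(h \<longlongrightarrow> h w) (at w)" by (simp add: isCont_def)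
        hence "eventually (\<lambda>y. h y > M) (at w)" using hw order_tendstoD(1) by blast
        thus ?thesis using filter_leD[OF at_le[of K UNIV]] by auto
      next
        case False
        have "filterlim h at_top (at w within K)" using blow[OF wC False] .
        thus ?thesis unfolding filterlim_at_top_dense by blast
      qed
      then obtain d where d: "d > 0" "\<And>y. y \<in> K \<Longrightarrow> y \<noteq> w \<Longrightarrow> dist y w < d \<Longrightarrow> h y > M"
        unfolding eventually_at by blast
      obtain y where "y \<in> ?T" "y \<noteq> w" "dist y w < d"
        using lw d(1) unfolding islimpt_approachable by blast
      thus False using d(2)[of y] by auto
    qed
  qed
  ultimately show ?thesis using compact_eq_bounded_closed by blast
qed



theorem theorem2p1:
  fixes Kb :: "('a::euclidean_space) set"
    and A :: "'a \<Rightarrow> real ^ 'm" and b :: "real ^ 'm"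
    and f :: "'a \<Rightarrow> real" and gf :: "'a \<Rightarrow> 'a"
    and nu :: real and h :: "'a \<Rightarrow> real" and gh :: "'a \<Rightarrow> 'a" and H :: "'a \<Rightarrow> 'a \<Rightarrow> 'a"
    and xstar :: 'a
  assumes Kb_closed: "closed Kb" and Kb_convex: "convex Kb"
    and K_ne: "interior Kb \<noteq> {}"
    and A_lin: "linear A" and A_surj: "range A = UNIV"
    and X_ne: "interior Kb \<inter> {x. A x = b} \<noteq> {}"
    and f_cont: "continuous_on (Kb \<inter> {x. A x = b}) f"
    and f_diff: "\<forall>x\<in>interior Kb \<inter> {x. A x = b}. (f has_derivative (\<lambda>d. gf x \<bullet> d)) (at x)"
    and gf_cont: "continuous_on (interior Kb \<inter> {x. A x = b}) gf"
    and glob: "\<exists>z\<in>Kb \<inter> {x. A x = b}. \<forall>x\<in>Kb \<inter> {x. A x = b}. f z \<le> f x"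
    and barrier: "sc_barrier Kb nu h gh H"
    and xstar_feas: "xstar \<in> Kb" "A xstar = b"
    and xstar_loc: "\<exists>e>0. \<forall>x\<in>Kb \<inter> {x. A x = b}. dist x xstar < e \<longrightarrow> f xstar \<le> f x"
  shows "\<exists>(x :: nat \<Rightarrow> 'a) (y :: nat \<Rightarrow> real ^ 'm) (s :: nat \<Rightarrow> 'a) (sigma :: nat \<Rightarrow> real).
     (\<forall>k. sigma k > 0) \<and> sigma \<longlonglongrightarrow> 0 \<and>
     (\<forall>k. x k \<in> interior Kb \<and> A (x k) = b) \<and> x \<longlonglongrightarrow> xstar \<and>
     (\<lambda>k. gf (x k) - adjoint A (y k) - s k) \<longlonglongrightarrow> 0 \<and>
     (\<forall>k. - s k \<in> approx_normal_cone (sigma k) Kb (x k)) \<and>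
     (\<forall>(g2 :: 'a \<Rightarrow> 'a) (Hf :: 'a \<Rightarrow> 'a \<Rightarrow> 'a).
        (\<forall>z\<in>interior Kb. (f has_derivative (\<lambda>d. g2 z \<bullet> d)) (at z) \<and> (g2 has_derivative Hf z) (at z))
        \<longrightarrow> (\<exists>(theta :: nat \<Rightarrow> real) (delta :: nat \<Rightarrow> real).
              (\<forall>k. theta k > 0 \<and> delta k > 0) \<and> theta \<longlonglongrightarrow> 0 \<and> delta \<longlonglongrightarrow> 0 \<and>
              (\<forall>k d. A d = 0 \<longrightarrow>
                 (Hf (x k) d + theta k *\<^sub>R H (x k) d + delta k *\<^sub>R d) \<bullet> d \<ge> 0)))"
proof -
  define K where "K = interior Kb"
  define L where "L = {x. A x = b}"
  obtain e where e: "e > 0" "\<forall>x\<in>Kb \<inter> L. dist x xstar < e \<longrightarrow> f xstar \<le> f x"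
    using xstar_loc unfolding L_def by blast
  define r where "r = e / 2"
  have r: "r > 0" "r < e" using e by (auto simp: r_def)
  define C where "C = Kb \<inter> L \<inter> cball xstar r"
  have hder: "\<And>z. z \<in> K \<Longrightarrow> (h has_derivative (\<lambda>u. gh z \<bullet> u)) (at z)"
    and gH: "\<And>z. z \<in> K \<Longrightarrow> (gh has_derivative H z) (at z)"
    and blow0: "\<And>z. z \<in> Kb - K \<Longrightarrow> filterlim h at_top (at z within K)"
    using barrier unfolding sc_barrier_def K_def by blast+
  have Kopen: "open K" by (simp add: K_def)
  have KKb: "K \<subseteq> Kb" by (simp add: K_def interior_subset)
  have hcont: "continuous_on K h"
    using hder has_derivative_continuous continuous_at_imp_continuous_on by blast
  have Lclosed: "closed L"
    unfolding L_def using A_lin by (intro closed_Collect_eq continuous_intros) (simp_all add: linear_continuous_on linear_linear)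
  have Ccomp: "compact C"
    unfolding C_def using Kb_closed Lclosed by (intro closed_Int_compact closed_Int compact_cball)
  have xsC: "xstar \<in> C" using xstar_feas r by (simp add: C_def L_def)
  have CKbL: "C \<subseteq> Kb \<inter> L" by (auto simp: C_def)
  have blow: "\<And>z. z \<in> C \<Longrightarrow> z \<notin> K \<Longrightarrow> filterlim h at_top (at z within K)"
    using blow0 CKbL by blast
  have Tcomp: "compact {w\<in>C. w \<in> K \<and> h w \<le> M}" for M
    by (rule sublevel_compact[OF Ccomp Kopen hcont blow])
  have fcC: "continuous_on C f" using f_cont CKbL continuous_on_subset unfolding L_def by blast
  obtain fm where fm: "\<And>w. w \<in> C \<Longrightarrow> fm \<le> f w"
    using continuous_attains_inf[OF Ccomp _ fcC] xsC by blast
  have fmin: "\<And>w. w \<in> C \<Longrightarrow> f xstar \<le> f w"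
    using e(2) r unfolding C_def by (auto simp: dist_commute)
  have appr: "\<exists>z\<in>K \<inter> L. dist z xstar < eta \<and> \<bar>f z - f xstar\<bar> < eta" if eta: "eta > 0" for eta
  proof -
    obtain w where w: "w \<in> K" "A w = b" using X_ne unfolding K_def by blast
    have xsKL: "xstar \<in> Kb \<inter> {x. A x = b}" using xstar_feas by simp
    obtain dl where dl: "dl > 0" "\<And>x'. x' \<in> Kb \<inter> {x. A x = b} \<Longrightarrow> dist x' xstar < dl \<Longrightarrow> dist (f x') (f xstar) < eta"
      using f_cont[unfolded continuous_on_iff, rule_format, OF xsKL eta] by blast
    define N where "N = norm (xstar - w)"
    define m where "m = min eta dl"
    have m: "m > 0" using eta dl by (simp add: m_def)
    define t where "t = min 1 (m / (2 * (N + 1)))"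
    have N0: "N \<ge> 0" by (simp add: N_def)
    have t: "t > 0" "t \<le> 1" using m N0 by (auto simp: t_def)
    define z where "z = xstar - t *\<^sub>R (xstar - w)"
    have zK: "z \<in> K"
      unfolding z_def K_def
      by (rule mem_interior_closure_convex_shrink[OF Kb_convex _ _ t]) (use w xstar_feas closure_subset K_def in auto)
    have zL: "A z = b"
      unfolding z_def using xstar_feas w by (simp add: linear_diff[OF A_lin] linear_scale[OF A_lin])
    have "t * N \<le> (m / (2 * (N + 1))) * N" using N0 by (intro mult_right_mono) (auto simp: t_def)
    also have "\<dots> < m" using m N0 by (simp add: field_simps add_nonneg_pos)
    finally have "t * N < m" .
    hence dz: "dist z xstar < m" by (simp add: z_def dist_norm N_def t(1) less_imp_le)
    have "dist (f z) (f xstar) < eta" using dl(2)[of z] zK zL KKb dz by (auto simp: m_def)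
    thus ?thesis using zK zL dz by (auto simp: L_def m_def dist_real_def intro!: bexI[of _ z])
  qed
  obtain w0 where w0: "w0 \<in> K \<inter> L" "dist w0 xstar < r"
    using appr[OF r(1)] by blast
  have w0C: "w0 \<in> C" using w0 KKb by (auto simp: C_def dist_commute)
  obtain hlow where hlow: "\<And>w. w \<in> C \<Longrightarrow> w \<in> K \<Longrightarrow> hlow \<le> h w"
  proof -
    let ?T0 = "{w\<in>C. w \<in> K \<and> h w \<le> h w0}"
    have "continuous_on ?T0 h" by (rule continuous_on_subset[OF hcont]) auto
    then obtain m where m: "m \<in> ?T0" "\<And>w. w \<in> ?T0 \<Longrightarrow> h m \<le> h w"
      using continuous_attains_inf[OF Tcomp, of "h w0" h] w0C w0 by auto
    have "h m \<le> h w" if "w \<in> C" "w \<in> K" for w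
      using m that by (cases "h w \<le> h w0") force+
    thus ?thesis using that by blast
  qed
  have claim: "\<exists>x mu y. 0 < mu \<and> mu \<le> eps \<and> x \<in> K \<and> A x = b \<and> (norm (x - xstar))^2 \<le> 3 * eps \<and>
      adjoint A y = gf x + mu *\<^sub>R gh x + (2 * eps) *\<^sub>R (x - xstar) \<and>
      (\<forall>(g2 :: 'a \<Rightarrow> 'a) (Hf :: 'a \<Rightarrow> 'a \<Rightarrow> 'a).
        (\<forall>z\<in>interior Kb. (f has_derivative (\<lambda>d. g2 z \<bullet> d)) (at z) \<and> (g2 has_derivative Hf z) (at z))
        \<longrightarrow> (\<forall>d. A d = 0 \<longrightarrow> (Hf x d + mu *\<^sub>R H x d + (2 * eps) *\<^sub>R d) \<bullet> d \<ge> 0))"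
    if eps: "0 < eps" "eps \<le> 1" "eps < r" "3 * eps < r^2" for eps
  proof -
    have eps2: "eps^2 \<le> eps" using eps by (simp add: power2_eq_square mult_left_le)
    obtain z where z: "z \<in> K" "A z = b" "dist z xstar < eps^2" "\<bar>f z - f xstar\<bar> < eps^2"
      using appr[of "eps^2"] eps by (auto simp: L_def)
    have dz: "dist z xstar < eps" using z(3) eps2 by linarith
    have zC: "z \<in> C" using z dz eps KKb by (auto simp: C_def L_def dist_commute)
    define D where "D = h z - hlow"
    have D: "D \<ge> 0" using hlow[OF zC z(1)] by (simp add: D_def)
    define mu where "mu = min eps (eps^2 / (D + 1))"
    have mu: "mu > 0" "mu \<le> eps" using eps D by (auto simp: mu_def)
    have muD: "mu * D \<le> eps^2"
    proof -
      have "mu * D \<le> (eps^2 / (D + 1)) * D" using D by (intro mult_right_mono) (auto simp: mu_def)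
      also have "\<dots> \<le> eps^2" using D by (simp add: field_simps)
      finally show ?thesis .
    qed
    define q where "q = (\<lambda>w. (w - xstar) \<bullet> (w - xstar))"
    have qn: "q w = (norm (w - xstar))^2" for w by (simp add: q_def power2_norm_eq_inner)
    have qnn: "q w \<ge> 0" for w by (simp add: qn)
    define F where "F = (\<lambda>w. f w + mu * h w + eps * q w)"
    define M where "M = max (h z) ((F z - fm) / mu)"
    define T where "T = {w\<in>C. w \<in> K \<and> h w \<le> M}"
    have zT: "z \<in> T" using zC z by (simp add: T_def M_def)
    have Fc: "continuous_on T F"
    proof -
      have c1: "continuous_on T f" by (rule continuous_on_subset[OF fcC]) (auto simp: T_def)
      have c2: "continuous_on T h" by (rule continuous_on_subset[OF hcont]) (auto simp: T_def)
      show ?thesis unfolding F_def q_def by (intro continuous_intros c1 c2)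
    qed
    obtain xk where xk: "xk \<in> T" "\<And>w. w \<in> T \<Longrightarrow> F xk \<le> F w"
      using continuous_attains_inf[OF Tcomp[of M, folded T_def] _ Fc] zT by blast
    have xkC: "xk \<in> C" and xkK: "xk \<in> K" using xk(1) by (auto simp: T_def)
    have xmin: "F xk \<le> F w" if w: "w \<in> C" "w \<in> K" for w
    proof (cases "h w \<le> M")
      case True thus ?thesis using xk w by (simp add: T_def)
    next
      case False
      hence "h w > (F z - fm) / mu" by (simp add: M_def)
      hence "mu * h w > F z - fm" using mu by (simp add: field_simps)
      moreover have "F w \<ge> fm + mu * h w"
      proof -
        have "eps * q w \<ge> 0" using qnn[of w] eps by simp
        thus ?thesis using fm[OF w(1)] by (simp add: F_def)
      qed
      moreover have "F xk \<le> F z" using xk zT by blast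
      ultimately show ?thesis by linarith
    qed
    have Fle: "F xk \<le> F z" using xk zT by blast
    have qz: "q z \<le> eps^2"
    proof -
      have "norm (z - xstar) < eps" using dz by (simp add: dist_norm)
      hence "(norm (z - xstar))^2 \<le> eps^2" by (intro power_mono) auto
      thus ?thesis by (simp add: qn)
    qed
    have "eps * q xk \<le> 3 * eps^2"
    proof -
      have f1: "f xk \<ge> f xstar" using fmin[OF xkC] .
      have h1: "mu * h xk \<ge> mu * hlow" using hlow[OF xkC xkK] mu by simp
      have h2: "mu * h z = mu * hlow + mu * D" by (simp add: D_def algebra_simps)
      have e1: "eps * q z \<le> eps * eps^2" using qz eps by (intro mult_left_mono) auto
      have e2: "eps * eps^2 \<le> eps^2" using eps by (simp add: mult_left_le_one_le)
      have "f z - f xstar < eps^2" using z(4) by linarith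
      thus ?thesis using Fle f1 h1 h2 e1 e2 muD unfolding F_def by linarith
    qed
    hence qx: "q xk \<le> 3 * eps" using eps by (simp add: power2_eq_square)
    have nx: "(norm (xk - xstar))^2 \<le> 3 * eps" using qx by (simp add: qn)
    have nxr: "norm (xk - xstar) < r"
    proof (rule ccontr)
      assume "\<not> ?thesis"
      hence "r^2 \<le> (norm (xk - xstar))^2" using r by (intro power_mono) auto
      thus False using nx eps by linarith
    qed
    have xkA: "A xk = b" using xkC by (simp add: C_def L_def)
    define Ob where "Ob = K \<inter> ball xstar r"
    have Oo: "open Ob" by (simp add: Ob_def Kopen open_Int)
    have xO: "xk \<in> Ob" using xkK nxr by (simp add: Ob_def dist_norm norm_minus_commute)
    obtain rho where rho: "rho > 0" "ball xk rho \<subseteq> Ob" using Oo xO open_contains_ball by blast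
    have line: "\<exists>e'>0. \<forall>t. \<bar>t\<bar> < e' \<longrightarrow> xk + t *\<^sub>R d \<in> K \<and> xk + t *\<^sub>R d \<in> C" if Ad: "A d = 0" for d
    proof (intro exI conjI allI impI)
      show "rho / (norm d + 1) > 0" using rho by (simp add: add_nonneg_pos)
      fix t assume t: "\<bar>t\<bar> < rho / (norm d + 1)"
      have "\<bar>t\<bar> * norm d \<le> \<bar>t\<bar> * (norm d + 1)" by (simp add: mult_left_mono)
      also have "\<dots> < rho"
      proof -
        have np: "norm d + 1 > 0" by (simp add: add_nonneg_pos)
        show ?thesis using t pos_less_divide_eq[OF np] by simp
      qed
      finally have "dist xk (xk + t *\<^sub>R d) < rho" by (simp add: dist_norm)
      hence "xk + t *\<^sub>R d \<in> Ob" using rho by auto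
      hence p: "xk + t *\<^sub>R d \<in> K" "xk + t *\<^sub>R d \<in> ball xstar r" by (auto simp: Ob_def)
      show "xk + t *\<^sub>R d \<in> K" using p by simp
      have "A (xk + t *\<^sub>R d) = b" using xkA Ad by (simp add: linear_add[OF A_lin] linear_scale[OF A_lin])
      thus "xk + t *\<^sub>R d \<in> C" using p KKb by (auto simp: C_def L_def)
    qed
    have Fder: "(F has_derivative (\<lambda>v. (G w + mu *\<^sub>R gh w + (2 * eps) *\<^sub>R (w - xstar)) \<bullet> v)) (at w)"
      if w: "w \<in> K" and fd: "(f has_derivative (\<lambda>v. G w \<bullet> v)) (at w)" for G w
    proof -
      have "(F has_derivative (\<lambda>v. G w \<bullet> v + mu * (gh w \<bullet> v) + eps * ((w - xstar) \<bullet> (v - 0) + (v - 0) \<bullet> (w - xstar)))) (at w)"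
        unfolding F_def q_def
        by (intro has_derivative_add has_derivative_mult_right has_derivative_inner has_derivative_diff
            has_derivative_ident has_derivative_const fd hder[OF w])
      moreover have "(\<lambda>v. G w \<bullet> v + mu * (gh w \<bullet> v) + eps * ((w - xstar) \<bullet> (v - 0) + (v - 0) \<bullet> (w - xstar)))
          = (\<lambda>v. (G w + mu *\<^sub>R gh w + (2 * eps) *\<^sub>R (w - xstar)) \<bullet> v)"
        by (simp add: fun_eq_iff inner_add_left inner_commute algebra_simps)
      ultimately show ?thesis by simp
    qed
    have lmin: "F xk \<le> F (xk + t *\<^sub>R d)" if "\<bar>t\<bar> < e'" "\<forall>t. \<bar>t\<bar> < e' \<longrightarrow> xk + t *\<^sub>R d \<in> K \<and> xk + t *\<^sub>R d \<in> C" for t e' d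
      using xmin that by blast
    have foc: "(gf xk + mu *\<^sub>R gh xk + (2 * eps) *\<^sub>R (xk - xstar)) \<bullet> d = 0" if Ad: "A d = 0" for d
    proof -
      obtain e' where e': "e' > 0" "\<forall>t. \<bar>t\<bar> < e' \<longrightarrow> xk + t *\<^sub>R d \<in> K \<and> xk + t *\<^sub>R d \<in> C"
        using line[OF Ad] by blast
      have "(F has_derivative (\<lambda>v. (gf xk + mu *\<^sub>R gh xk + (2 * eps) *\<^sub>R (xk - xstar)) \<bullet> v)) (at (xk + 0 *\<^sub>R d))"
        using Fder[OF xkK, of gf] f_diff xkK xkA by (simp add: K_def)
      from line_deriv[OF this] have "((\<lambda>s. F (xk + s *\<^sub>R d)) has_real_derivative
          (gf xk + mu *\<^sub>R gh xk + (2 * eps) *\<^sub>R (xk - xstar)) \<bullet> d) (at 0)" .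
      moreover have "\<forall>t. \<bar>0 - t\<bar> < e' \<longrightarrow> F (xk + 0 *\<^sub>R d) \<le> F (xk + t *\<^sub>R d)"
        using lmin[OF _ e'(2)] by simp
      ultimately show ?thesis using DERIV_local_min[OF _ e'(1)] by blast
    qed
    obtain yv where yv: "adjoint A yv = gf xk + mu *\<^sub>R gh xk + (2 * eps) *\<^sub>R (xk - xstar)"
      using adjoint_range[OF A_lin foc] by blast
    have soc: "(Hf xk d + mu *\<^sub>R H xk d + (2 * eps) *\<^sub>R d) \<bullet> d \<ge> 0"
      if hyp: "\<forall>z\<in>interior Kb. (f has_derivative (\<lambda>d. g2 z \<bullet> d)) (at z) \<and> (g2 has_derivative Hf z) (at z)"
        and Ad: "A d = 0" for g2 Hf d
    proof -
      obtain e' where e': "e' > 0" "\<forall>t. \<bar>t\<bar> < e' \<longrightarrow> xk + t *\<^sub>R d \<in> K \<and> xk + t *\<^sub>R d \<in> C"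
        using line[OF Ad] by blast
      define G2 where "G2 = (\<lambda>w. g2 w + mu *\<^sub>R gh w + (2 * eps) *\<^sub>R (w - xstar))"
      define psi where "psi = (\<lambda>s. G2 (xk + s *\<^sub>R d) \<bullet> d)"
      have d1: "((\<lambda>s. F (xk + s *\<^sub>R d)) has_real_derivative psi t) (at t)" if t: "\<bar>t\<bar> < e'" for t
      proof -
        have pK: "xk + t *\<^sub>R d \<in> K" using e'(2) t by blast
        have "(F has_derivative (\<lambda>v. G2 (xk + t *\<^sub>R d) \<bullet> v)) (at (xk + t *\<^sub>R d))"
          unfolding G2_def using Fder[OF pK, of g2] hyp pK by (simp add: K_def)
        from line_deriv[OF this] show ?thesis by (simp add: psi_def)
      qed
      have "((\<lambda>w. G2 w \<bullet> d) has_derivative (\<lambda>v. (Hf xk v + mu *\<^sub>R H xk v + (2 * eps) *\<^sub>R (v - 0)) \<bullet> d)) (at (xk + 0 *\<^sub>R d))"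
        unfolding G2_def using hyp xkK gH[OF xkK]
        by (simp, intro has_derivative_inner_left has_derivative_add has_derivative_scaleR_right has_derivative_diff
            has_derivative_ident has_derivative_const) (auto simp: K_def intro!: derivative_eq_intros)
      from line_deriv[OF this] have d2: "(psi has_real_derivative (Hf xk d + mu *\<^sub>R H xk d + (2 * eps) *\<^sub>R d) \<bullet> d) (at 0)"
        by (simp add: psi_def)
      show ?thesis
        by (rule second_order_1d[OF e'(1) _ d1 d2]) (use lmin[OF _ e'(2)] in simp)
    qed
    show ?thesis
      apply (rule exI[of _ xk], rule exI[of _ mu], rule exI[of _ yv])
      using mu xkK xkA nx yv soc by blast
  qed
  define epsk where "epsk = (\<lambda>k::nat. min (r/2) (min (1/2) (r^2/4)) / real (Suc k))"
  define c0 where "c0 = min (r/2) (min (1/2) (r^2/4))"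
  have c0: "c0 > 0" "c0 \<le> r/2" "c0 \<le> 1/2" "c0 \<le> r^2/4" using r by (auto simp: c0_def)
  have epsk_le: "epsk k \<le> c0" for k
    using c0 by (simp add: epsk_def c0_def[symmetric] divide_le_eq)
  have epsk: "0 < epsk k" "epsk k \<le> 1" "epsk k < r" "3 * epsk k < r^2" for k
    using epsk_le[of k] c0 r by (auto simp: epsk_def c0_def[symmetric])
  have epsk0: "epsk \<longlonglongrightarrow> 0"
    unfolding epsk_def c0_def[symmetric] using LIMSEQ_Suc[OF lim_const_over_n[of c0]] by simp
  obtain x mu y where xmy: "\<And>k. 0 < mu k \<and> mu k \<le> epsk k \<and> x k \<in> K \<and> A (x k) = b \<and> (norm (x k - xstar))^2 \<le> 3 * epsk k \<and>
      adjoint A (y k) = gf (x k) + mu k *\<^sub>R gh (x k) + (2 * epsk k) *\<^sub>R (x k - xstar) \<and>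
      (\<forall>(g2 :: 'a \<Rightarrow> 'a) (Hf :: 'a \<Rightarrow> 'a \<Rightarrow> 'a).
        (\<forall>z\<in>interior Kb. (f has_derivative (\<lambda>d. g2 z \<bullet> d)) (at z) \<and> (g2 has_derivative Hf z) (at z))
        \<longrightarrow> (\<forall>d. A d = 0 \<longrightarrow> (Hf (x k) d + mu k *\<^sub>R H (x k) d + (2 * epsk k) *\<^sub>R d) \<bullet> d \<ge> 0))"
    using claim[OF epsk] by metis
  define s where "s = (\<lambda>k. - (mu k *\<^sub>R gh (x k)))"
  define sigma where "sigma = (\<lambda>k. mu k * (\<bar>nu\<bar> + 1))"
  have mu0: "mu \<longlonglongrightarrow> 0"
  proof (rule tendsto_sandwich[OF _ _ tendsto_const epsk0])
    show "\<forall>\<^sub>F k in sequentially. 0 \<le> mu k"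
      by (rule always_eventually) (use xmy in \<open>auto intro: less_imp_le\<close>)
    show "\<forall>\<^sub>F k in sequentially. mu k \<le> epsk k"
      by (rule always_eventually) (use xmy in auto)
  qed
  have sq0: "(\<lambda>k. sqrt (3 * epsk k)) \<longlonglongrightarrow> 0"
    using tendsto_real_sqrt[OF tendsto_mult_right_zero[OF epsk0, of 3]] by simp
  have xd0: "(\<lambda>k. x k - xstar) \<longlonglongrightarrow> 0"
  proof (rule Lim_null_comparison[OF _ sq0])
    show "\<forall>\<^sub>F k in sequentially. norm (x k - xstar) \<le> sqrt (3 * epsk k)"
      by (rule always_eventually) (use xmy in \<open>auto intro: real_le_rsqrt\<close>)
  qed
  have xconv: "x \<longlonglongrightarrow> xstar" using LIM_zero_cancel[OF xd0] .
  have resid: "gf (x k) - adjoint A (y k) - s k = - ((2 * epsk k) *\<^sub>R (x k - xstar))" for k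
    using xmy[of k] by (simp add: s_def algebra_simps)
  have res0: "(\<lambda>k. gf (x k) - adjoint A (y k) - s k) \<longlonglongrightarrow> 0"
    unfolding resid using tendsto_minus[OF tendsto_scaleR[OF tendsto_mult_right_zero[OF epsk0, of 2] xd0]] by simp
  have cone: "- s k \<in> approx_normal_cone (sigma k) Kb (x k)" for k
  proof -
    have "mu k * (gh (x k) \<bullet> (z - x k)) \<le> mu k * (\<bar>nu\<bar> + 1)" if "z \<in> Kb" for z
    proof -
      have "gh (x k) \<bullet> (z - x k) \<le> nu"
        using nu_bound[OF barrier Kb_convex Kb_closed K_ne _ that] xmy[of k] by (simp add: K_def)
      hence "gh (x k) \<bullet> (z - x k) \<le> \<bar>nu\<bar> + 1" by linarith
      thus ?thesis using xmy[of k] by (intro mult_left_mono) auto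
    qed
    thus ?thesis by (simp add: approx_normal_cone_def s_def sigma_def)
  qed
  have second: "\<forall>(g2 :: 'a \<Rightarrow> 'a) (Hf :: 'a \<Rightarrow> 'a \<Rightarrow> 'a).
        (\<forall>z\<in>interior Kb. (f has_derivative (\<lambda>d. g2 z \<bullet> d)) (at z) \<and> (g2 has_derivative Hf z) (at z))
        \<longrightarrow> (\<exists>(theta :: nat \<Rightarrow> real) (delta :: nat \<Rightarrow> real).
              (\<forall>k. theta k > 0 \<and> delta k > 0) \<and> theta \<longlonglongrightarrow> 0 \<and> delta \<longlonglongrightarrow> 0 \<and>
              (\<forall>k d. A d = 0 \<longrightarrow>
                 (Hf (x k) d + theta k *\<^sub>R H (x k) d + delta k *\<^sub>R d) \<bullet> d \<ge> 0))"
  proof (intro allI impI)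
    fix g2 :: "'a \<Rightarrow> 'a" and Hf :: "'a \<Rightarrow> 'a \<Rightarrow> 'a"
    assume hyp: "\<forall>z\<in>interior Kb. (f has_derivative (\<lambda>d. g2 z \<bullet> d)) (at z) \<and> (g2 has_derivative Hf z) (at z)"
    have a1: "\<forall>k. mu k > 0 \<and> 2 * epsk k > 0" using xmy epsk(1) by simp
    have a2: "(\<lambda>k. 2 * epsk k) \<longlonglongrightarrow> 0" using tendsto_mult_right_zero[OF epsk0, of 2] .
    have a3: "\<forall>k d. A d = 0 \<longrightarrow> (Hf (x k) d + mu k *\<^sub>R H (x k) d + (2 * epsk k) *\<^sub>R d) \<bullet> d \<ge> 0"
      using xmy hyp by blast
    show "\<exists>(theta :: nat \<Rightarrow> real) (delta :: nat \<Rightarrow> real).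
              (\<forall>k. theta k > 0 \<and> delta k > 0) \<and> theta \<longlonglongrightarrow> 0 \<and> delta \<longlonglongrightarrow> 0 \<and>
              (\<forall>k d. A d = 0 \<longrightarrow>
                 (Hf (x k) d + theta k *\<^sub>R H (x k) d + delta k *\<^sub>R d) \<bullet> d \<ge> 0)"
      apply (rule exI[of _ mu], rule exI[of _ "\<lambda>k. 2 * epsk k"])
      using a1 a2 a3 mu0 by blast
  qed
  have b1: "\<forall>k. sigma k > 0" using xmy by (simp add: sigma_def add_pos_nonneg)
  have b2: "sigma \<longlonglongrightarrow> 0" unfolding sigma_def using tendsto_mult_left_zero[OF mu0] .
  have b3: "\<forall>k. x k \<in> interior Kb \<and> A (x k) = b" using xmy by (simp add: K_def)
  have b4: "\<forall>k. - s k \<in> approx_normal_cone (sigma k) Kb (x k)" using cone by blast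
  show ?thesis
    apply (rule exI[of _ x], rule exI[of _ y], rule exI[of _ s], rule exI[of _ sigma])
    using b1 b2 b3 xconv res0 b4 second by blast
qed

end
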